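(* Let $(X,\phi)$ be a flow on a compact metric space $(X,d)$. For every $\epsilon>0$ the limit $\lim_{t\to\infty}\frac1t\log\#(\phi,X,d_t,\epsilon)$ exists, and \begin{align*} \overline{\mathrm{mdim}}_M(\phi,X,d)&=\limsup_{\epsilon\to0}\lim_{t\to\infty}\frac{\log\#(\phi,X,d_t,\epsilon)}{t\log\frac1\epsilon}=\limsup_{\epsilon\to0}\limsup_{t\to\infty}\frac{\log s_t(\phi,X,d,\epsilon)}{t\log\frac1\epsilon},\\ \underline{\mathrm{mdim}}_M(\phi,X,d)&=\liminf_{\epsilon\to0}\lim_{t\to\infty}\frac{\log\#(\phi,X,d_t,\epsilon)}{t\log\frac1\epsilon}=\liminf_{\epsilon\to0}\limsup_{t\to\infty}\frac{\log s_t(\phi,X,d,\epsilon)}{t\log\frac1\epsilon}. \end{align*}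
   Context: A flow: $\phi:X\times\mathbb{R}\to X$ continuous, $\phi_t(x)=\phi(x,t)$, $\phi_0=\mathrm{id}$, $\phi_{t+s}=\phi_t\circ\phi_s$. $d_t(x,y)=\max_{s\in[0,t]}d(\phi_sx,\phi_sy)$. $\#(\phi,X,d_t,\epsilon)$ is the minimal cardinality of an open cover of $X$ each of whose members has $d_t$-diameter less than $\epsilon$. $s_t(\phi,X,d,\epsilon)$ is the maximal cardinality of a set $F\subset X$ with $d_t(x,y)\ge\epsilon$ for all distinct $x,y\in F$. $r_t(\phi,X,d,\epsilon)$ is the minimal cardinality of $E\subset X$ such that every $x\in X$ has $y\in E$ with $d_t(x,y)<\epsilon$; $r(\phi,X,d,\epsilon)=\limsup_{t\to\infty}\frac1t\log r_t(\phi,X,d,\epsilon)$; $\overline{\mathrm{mdim}}_M(\phi,X,d)=\limsup_{\epsilon\to0}\frac{r(\phi,X,d,\epsilon)}{\log(1/\epsilon)}$ and $\underline{\mathrm{mdim}}_M$ is the same with $\liminf_{\epsilon\to0}$. *)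

theory Defs
  imports "HOL-Analysis.Analysis"
begin

definition flow :: "'a::metric_space set \<Rightarrow> ('a \<Rightarrow> real \<Rightarrow> 'a) \<Rightarrow> bool" where
  "flow X \<phi> \<longleftrightarrow>
     continuous_on (X \<times> UNIV) (\<lambda>(x, t). \<phi> x t) \<and>
     (\<forall>x\<in>X. \<forall>t. \<phi> x t \<in> X) \<and>
     (\<forall>x\<in>X. \<phi> x 0 = x) \<and>
     (\<forall>x\<in>X. \<forall>t s. \<phi> x (t + s) = \<phi> (\<phi> x s) t)"

definition bowen_dist :: "('a::metric_space \<Rightarrow> real \<Rightarrow> 'a) \<Rightarrow> real \<Rightarrow> 'a \<Rightarrow> 'a \<Rightarrow> real" where
  "bowen_dist \<phi> t x y = (SUP s\<in>{0..t}. dist (\<phi> x s) (\<phi> y s))"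

text \<open>d_t-diameter of a set (as an extended real; the empty set has diameter -infinity).\<close>
definition bowen_diam :: "('a::metric_space \<Rightarrow> real \<Rightarrow> 'a) \<Rightarrow> real \<Rightarrow> 'a set \<Rightarrow> ereal" where
  "bowen_diam \<phi> t U = (SUP p\<in>U \<times> U. ereal (bowen_dist \<phi> t (fst p) (snd p)))"

definition cover_num :: "('a::metric_space \<Rightarrow> real \<Rightarrow> 'a) \<Rightarrow> 'a set \<Rightarrow> real \<Rightarrow> real \<Rightarrow> nat" where
  "cover_num \<phi> X t \<epsilon> = Inf {card \<U> | \<U>. finite \<U> \<and> (\<forall>U\<in>\<U>. openin (top_of_set X) U) \<and>
       X \<subseteq> \<Union>\<U> \<and> (\<forall>U\<in>\<U>. bowen_diam \<phi> t U < ereal \<epsilon>)}"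

definition sep_num :: "('a::metric_space \<Rightarrow> real \<Rightarrow> 'a) \<Rightarrow> 'a set \<Rightarrow> real \<Rightarrow> real \<Rightarrow> nat" where
  "sep_num \<phi> X t \<epsilon> = Sup {card F | F. finite F \<and> F \<subseteq> X \<and>
       (\<forall>x\<in>F. \<forall>y\<in>F. x \<noteq> y \<longrightarrow> bowen_dist \<phi> t x y \<ge> \<epsilon>)}"

definition span_num :: "('a::metric_space \<Rightarrow> real \<Rightarrow> 'a) \<Rightarrow> 'a set \<Rightarrow> real \<Rightarrow> real \<Rightarrow> nat" where
  "span_num \<phi> X t \<epsilon> = Inf {card E | E. finite E \<and> E \<subseteq> X \<and>
       (\<forall>x\<in>X. \<exists>y\<in>E. bowen_dist \<phi> t x y < \<epsilon>)}"

definition span_rate :: "('a::metric_space \<Rightarrow> real \<Rightarrow> 'a) \<Rightarrow> 'a set \<Rightarrow> real \<Rightarrow> ereal" where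
  "span_rate \<phi> X \<epsilon> = Limsup at_top (\<lambda>t. ereal (ln (real (span_num \<phi> X t \<epsilon>)) / t))"

definition upper_mmdim :: "('a::metric_space \<Rightarrow> real \<Rightarrow> 'a) \<Rightarrow> 'a set \<Rightarrow> ereal" where
  "upper_mmdim \<phi> X = Limsup (at_right 0) (\<lambda>\<epsilon>. span_rate \<phi> X \<epsilon> / ereal (ln (1 / \<epsilon>)))"

definition lower_mmdim :: "('a::metric_space \<Rightarrow> real \<Rightarrow> 'a) \<Rightarrow> 'a set \<Rightarrow> ereal" where
  "lower_mmdim \<phi> X = Liminf (at_right 0) (\<lambda>\<epsilon>. span_rate \<phi> X \<epsilon> / ereal (ln (1 / \<epsilon>)))"

end

theory Submission imports Defs begin

locale cflow =
  fixes X :: "'a::metric_space set" and \<phi> :: "'a \<Rightarrow> real \<Rightarrow> 'a"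
  assumes cpt: "compact X" and fl: "flow X \<phi>"
begin

abbreviation D where "D \<equiv> bowen_dist \<phi>"

lemma phi_in: "x \<in> X \<Longrightarrow> \<phi> x t \<in> X" using fl by (auto simp: flow_def)
lemma phi0: "x \<in> X \<Longrightarrow> \<phi> x 0 = x" using fl by (auto simp: flow_def)
lemma phi_add: "x \<in> X \<Longrightarrow> \<phi> x (t + s) = \<phi> (\<phi> x s) t" using fl by (auto simp: flow_def)
lemma phi_cont: "continuous_on (X \<times> UNIV) (\<lambda>(x, t). \<phi> x t)" using fl by (auto simp: flow_def)

lemma cont_s: assumes "x \<in> X" shows "continuous_on UNIV (\<lambda>s. \<phi> x s)"
proof -
  have "continuous_on UNIV (\<lambda>s. (\<lambda>(x, t). \<phi> x t) ((\<lambda>s. (x, s)) s))"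
    by (rule continuous_on_compose2[OF phi_cont]) (use assms in \<open>auto intro!: continuous_intros\<close>)
  then show ?thesis by simp
qed

lemma cont_x: "continuous_on X (\<lambda>x. \<phi> x t)"
proof -
  have "continuous_on X (\<lambda>x. (\<lambda>(x, t). \<phi> x t) ((\<lambda>x. (x, t)) x))"
    by (rule continuous_on_compose2[OF phi_cont]) (auto intro!: continuous_intros)
  then show ?thesis by simp
qed

lemma bdd: assumes "x \<in> X" "y \<in> X" shows "bdd_above ((\<lambda>s. dist (\<phi> x s) (\<phi> y s)) ` {0..t})"
proof -
  have "continuous_on {0..t} (\<lambda>s. dist (\<phi> x s) (\<phi> y s))"
    using cont_s[OF assms(1)] cont_s[OF assms(2)]
    by (intro continuous_intros) (auto intro: continuous_on_subset)
  then have "compact ((\<lambda>s. dist (\<phi> x s) (\<phi> y s)) ` {0..t})"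
    by (intro compact_continuous_image) auto
  then show ?thesis by (intro bounded_imp_bdd_above compact_imp_bounded)
qed

lemma bd_ge: "x \<in> X \<Longrightarrow> y \<in> X \<Longrightarrow> s \<in> {0..t} \<Longrightarrow> dist (\<phi> x s) (\<phi> y s) \<le> D t x y"
  unfolding bowen_dist_def by (rule cSUP_upper[OF _ bdd])

lemma bd_le: "0 \<le> t \<Longrightarrow> (\<And>s. s \<in> {0..t} \<Longrightarrow> dist (\<phi> x s) (\<phi> y s) \<le> c) \<Longrightarrow> D t x y \<le> c"
  unfolding bowen_dist_def by (rule cSUP_least) auto

lemma bd_nonneg: assumes "x \<in> X" "y \<in> X" "0 \<le> t" shows "0 \<le> D t x y"
proof -
  have "dist (\<phi> x 0) (\<phi> y 0) \<le> D t x y" by (rule bd_ge) (use assms in auto)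
  then show ?thesis using zero_le_dist[of "\<phi> x 0" "\<phi> y 0"] by linarith
qed

lemma bd_sym: "D t x y = D t y x"
  unfolding bowen_dist_def by (simp add: dist_commute)

lemma bd_self: "0 \<le> t \<Longrightarrow> D t x x = 0"
  unfolding bowen_dist_def by simp

lemma bd_tri: assumes "x \<in> X" "y \<in> X" "z \<in> X" "0 \<le> t" shows "D t x z \<le> D t x y + D t y z"
proof (rule bd_le[OF assms(4)])
  fix s assume s: "s \<in> {0..t}"
  have "dist (\<phi> x s) (\<phi> z s) \<le> dist (\<phi> x s) (\<phi> y s) + dist (\<phi> y s) (\<phi> z s)" by (rule dist_triangle)
  also have "\<dots> \<le> D t x y + D t y z" using bd_ge[OF _ _ s] assms by (intro add_mono) auto
  finally show "dist (\<phi> x s) (\<phi> z s) \<le> D t x y + D t y z" .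
qed

lemma bd_mono: assumes "x \<in> X" "y \<in> X" "0 \<le> t" "t \<le> t'" shows "D t x y \<le> D t' x y"
  using assms by (intro bd_le bd_ge) auto

lemma bd_split: assumes "x \<in> X" "y \<in> X" "0 \<le> t" "0 \<le> s"
  shows "D (t + s) x y \<le> max (D t x y) (D s (\<phi> x t) (\<phi> y t))"
proof (rule bd_le)
  fix r assume r: "r \<in> {0..t+s}"
  show "dist (\<phi> x r) (\<phi> y r) \<le> max (D t x y) (D s (\<phi> x t) (\<phi> y t))"
  proof (cases "r \<le> t")
    case True
    then show ?thesis using bd_ge[OF assms(1,2), of r t] r by auto
  next
    case False
    have "\<phi> x r = \<phi> (\<phi> x t) (r - t)" "\<phi> y r = \<phi> (\<phi> y t) (r - t)"
      using phi_add[OF assms(1), of "r-t" t] phi_add[OF assms(2), of "r-t" t] by auto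
    moreover have "dist (\<phi> (\<phi> x t) (r - t)) (\<phi> (\<phi> y t) (r - t)) \<le> D s (\<phi> x t) (\<phi> y t)"
      using False r by (intro bd_ge phi_in assms) auto
    ultimately show ?thesis by auto
  qed
qed (use assms in auto)

lemma bd_unif: assumes "0 \<le> t" "\<eta> > 0"
  shows "\<exists>\<delta>>0. \<forall>x\<in>X. \<forall>y\<in>X. dist x y < \<delta> \<longrightarrow> D t x y \<le> \<eta>"
proof -
  have "uniformly_continuous_on (X \<times> {0..t}) (\<lambda>(x, t). \<phi> x t)"
    using phi_cont cpt by (intro compact_uniformly_continuous compact_Times)
      (auto intro: continuous_on_subset)
  then obtain \<delta> where d: "\<delta> > 0" and
    h: "\<forall>p\<in>X \<times> {0..t}. \<forall>p'\<in>X \<times> {0..t}. dist p' p < \<delta> \<longrightarrow>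
        dist ((\<lambda>(x, t). \<phi> x t) p') ((\<lambda>(x, t). \<phi> x t) p) < \<eta>"
    using assms(2) unfolding uniformly_continuous_on_def by (elim allE[of _ \<eta>]) blast
  show ?thesis
  proof (intro exI[of _ \<delta>] conjI ballI impI d)
    fix x y assume xy: "x \<in> X" "y \<in> X" "dist x y < \<delta>"
    show "D t x y \<le> \<eta>"
    proof (rule bd_le[OF assms(1)])
      fix s assume s: "s \<in> {0..t}"
      have "dist (x, s) (y, s) = dist x y" by (simp add: dist_Pair_Pair)
      then have "dist (\<phi> x s) (\<phi> y s) < \<eta>" using h[rule_format, of "(y,s)" "(x,s)"] xy s
        by (auto simp: dist_commute)
      then show "dist (\<phi> x s) (\<phi> y s) \<le> \<eta>" by simp
    qed
  qed
qed

lemma ball_open: assumes "0 \<le> t" "y \<in> X"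
  shows "openin (top_of_set X) {x\<in>X. D t x y < r}"
  unfolding openin_euclidean_subtopology_iff
proof (intro conjI ballI)
  fix x0 assume x0: "x0 \<in> {x\<in>X. D t x y < r}"
  define \<eta> where "\<eta> = (r - D t x0 y) / 2"
  have "\<eta> > 0" using x0 by (auto simp: \<eta>_def)
  then obtain \<delta> where d: "\<delta> > 0" "\<forall>x\<in>X. \<forall>y\<in>X. dist x y < \<delta> \<longrightarrow> D t x y \<le> \<eta>"
    using bd_unif[OF assms(1)] by blast
  show "\<exists>e>0. \<forall>x'\<in>X. dist x' x0 < e \<longrightarrow> x' \<in> {x\<in>X. D t x y < r}"
  proof (intro exI[of _ \<delta>] conjI ballI impI d(1))
    fix x' assume x': "x' \<in> X" "dist x' x0 < \<delta>"
    have "D t x' y \<le> D t x' x0 + D t x0 y" using x' x0 assms by (intro bd_tri) auto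
    also have "\<dots> < r" using d(2) x' x0 \<eta>_def by fastforce
    finally show "x' \<in> {x\<in>X. D t x y < r}" using x' by auto
  qed
qed auto



definition spanning where
  "spanning t e E \<longleftrightarrow> finite E \<and> E \<subseteq> X \<and> (\<forall>x\<in>X. \<exists>y\<in>E. D t x y < e)"
definition separated where
  "separated t e F \<longleftrightarrow> finite F \<and> F \<subseteq> X \<and> (\<forall>x\<in>F. \<forall>y\<in>F. x \<noteq> y \<longrightarrow> D t x y \<ge> e)"
definition goodcov where
  "goodcov t e \<U> \<longleftrightarrow> finite \<U> \<and> (\<forall>U\<in>\<U>. openin (top_of_set X) U) \<and> X \<subseteq> \<Union>\<U> \<and>
      (\<forall>U\<in>\<U>. bowen_diam \<phi> t U < ereal e)"

lemma span_num_eq: "span_num \<phi> X t e = Inf (card ` Collect (spanning t e))"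
  unfolding span_num_def spanning_def by (rule arg_cong[where f=Inf]) auto
lemma sep_num_eq: "sep_num \<phi> X t e = Sup (card ` Collect (separated t e))"
  unfolding sep_num_def separated_def by (rule arg_cong[where f=Sup]) auto
lemma cover_num_eq: "cover_num \<phi> X t e = Inf (card ` Collect (goodcov t e))"
  unfolding cover_num_def goodcov_def by (rule arg_cong[where f=Inf]) auto

lemma span_exists: assumes "0 \<le> t" "0 < e" shows "\<exists>E. spanning t e E"
proof -
  obtain \<delta> where d: "\<delta> > 0" "\<forall>x\<in>X. \<forall>y\<in>X. dist x y < \<delta> \<longrightarrow> D t x y \<le> e/2"
    using bd_unif[OF assms(1), of "e/2"] assms by auto
  have "\<exists>k. finite k \<and> k \<subseteq> X \<and> X \<subseteq> (\<Union>x\<in>k. ball x \<delta>)"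
    using seq_compact_imp_totally_bounded[OF compact_imp_seq_compact[OF cpt]] d(1) by simp
  then obtain k where k: "finite k" "k \<subseteq> X" "X \<subseteq> (\<Union>x\<in>k. ball x \<delta>)" by blast
  have "spanning t e k" unfolding spanning_def
  proof (intro conjI k(1,2) ballI)
    fix x assume x: "x \<in> X"
    then obtain y where y: "y \<in> k" "dist y x < \<delta>" using k(3) by auto
    then have "D t x y \<le> e/2" using d(2) x k(2) by (auto simp: dist_commute)
    then show "\<exists>y\<in>k. D t x y < e" using y assms by (intro bexI[of _ y]) auto
  qed
  then show ?thesis by blast
qed

lemma span_le: "spanning t e E \<Longrightarrow> span_num \<phi> X t e \<le> card E"
  unfolding span_num_eq by (rule cInf_lower) auto

lemma span_attain: assumes "0 \<le> t" "0 < e"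
  shows "\<exists>E. spanning t e E \<and> card E = span_num \<phi> X t e"
proof -
  have "card ` Collect (spanning t e) \<noteq> {}" using span_exists[OF assms] by auto
  from Inf_nat_def1[OF this] show ?thesis unfolding span_num_eq by auto
qed

lemma spanning_pos: assumes "X \<noteq> {}" "spanning t e E" shows "card E \<ge> 1"
proof -
  obtain x where "x \<in> X" using assms(1) by blast
  then obtain y where "y \<in> E" using assms(2) unfolding spanning_def by blast
  then have "E \<noteq> {}" by blast
  then have "card E > 0" using assms(2) unfolding spanning_def by (simp add: card_gt_0_iff)
  then show ?thesis by simp
qed

lemma span_pos: assumes "X \<noteq> {}" "0 \<le> t" "0 < e" shows "span_num \<phi> X t e \<ge> 1"
proof -
  obtain E where E: "spanning t e E" "card E = span_num \<phi> X t e" using span_attain[OF assms(2,3)] by blast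
  show ?thesis using spanning_pos[OF assms(1) E(1)] E(2) by simp
qed

lemma span_anti: assumes "0 \<le> t" "0 < e" "e \<le> e'" shows "span_num \<phi> X t e' \<le> span_num \<phi> X t e"
proof -
  obtain E where E: "spanning t e E" "card E = span_num \<phi> X t e" using span_attain[OF assms(1,2)] by blast
  have "spanning t e' E" using E(1) assms(3) unfolding spanning_def by force
  from span_le[OF this] show ?thesis using E(2) by simp
qed

lemma sep_bound: assumes "0 \<le> t" "0 < e" "separated t e F"
  shows "card F \<le> span_num \<phi> X t (e/2)"
proof -
  obtain E where E: "spanning t (e/2) E" "card E = span_num \<phi> X t (e/2)"
    using span_attain[OF assms(1), of "e/2"] assms(2) by auto
  define f where "f x = (SOME y. y \<in> E \<and> D t x y < e/2)" for x
  have f: "f x \<in> E \<and> D t x (f x) < e/2" if "x \<in> F" for x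
  proof -
    have "x \<in> X" using that assms(3) by (auto simp: separated_def)
    then have "\<exists>y. y \<in> E \<and> D t x y < e/2" using E(1) by (auto simp: spanning_def)
    then show ?thesis unfolding f_def by (rule someI_ex)
  qed
  have "inj_on f F"
  proof (rule inj_onI)
    fix x x' assume xx: "x \<in> F" "x' \<in> F" "f x = f x'"
    have X: "x \<in> X" "x' \<in> X" "f x \<in> X" using xx assms(3) E(1) f[OF xx(1)]
      by (auto simp: separated_def spanning_def)
    have "D t x x' \<le> D t x (f x) + D t (f x) x'" using X assms(1) by (intro bd_tri) auto
    also have "\<dots> < e" using f[OF xx(1)] f[OF xx(2)] xx(3) bd_sym[of t "f x" x'] by auto
    finally have lt: "D t x x' < e" .
    show "x = x'"
    proof (rule ccontr)
      assume "x \<noteq> x'"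
      then have "D t x x' \<ge> e" using assms(3) xx(1,2) unfolding separated_def by blast
      then show False using lt by linarith
    qed
  qed
  moreover have "f ` F \<subseteq> E" using f by auto
  ultimately have "card F \<le> card E" using E(1) by (intro card_inj_on_le) (auto simp: spanning_def)
  then show ?thesis using E(2) by simp
qed

lemma sep_fin: assumes "0 \<le> t" "0 < e" shows "finite (card ` Collect (separated t e))"
proof (rule finite_subset[of _ "{..span_num \<phi> X t (e/2)}"])
  show "card ` Collect (separated t e) \<subseteq> {..span_num \<phi> X t (e/2)}"
  proof
    fix n assume "n \<in> card ` Collect (separated t e)"
    then obtain F where "separated t e F" "n = card F" by blast
    then show "n \<in> {..span_num \<phi> X t (e/2)}" using sep_bound[OF assms] by simp
  qed
qed simp

lemma sep_upper: assumes "0 \<le> t" "0 < e" "separated t e F" shows "card F \<le> sep_num \<phi> X t e"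
  unfolding sep_num_eq using sep_fin[OF assms(1,2)] assms(3) by (intro le_cSup_finite) auto

lemma sep_attain: assumes "0 \<le> t" "0 < e" shows "\<exists>F. separated t e F \<and> card F = sep_num \<phi> X t e"
proof -
  have ne: "card ` Collect (separated t e) \<noteq> {}"
    using separated_def by auto
  have "Max (card ` Collect (separated t e)) \<in> card ` Collect (separated t e)"
    using sep_fin[OF assms] ne by (intro Max_in)
  then show ?thesis unfolding sep_num_eq Sup_nat_def using ne by auto
qed

lemma span_le_sep: assumes "0 \<le> t" "0 < e" shows "span_num \<phi> X t e \<le> sep_num \<phi> X t e"
proof -
  obtain F where F: "separated t e F" "card F = sep_num \<phi> X t e" using sep_attain[OF assms] by blast
  have "spanning t e F" unfolding spanning_def
  proof (intro conjI ballI)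
    show "finite F" "F \<subseteq> X" using F(1) by (auto simp: separated_def)
    fix x assume x: "x \<in> X"
    show "\<exists>y\<in>F. D t x y < e"
    proof (rule ccontr)
      assume "\<not> ?thesis"
      then have h: "\<forall>y\<in>F. D t x y \<ge> e" by auto
      have "x \<notin> F" using h bd_self[OF assms(1), of x] assms(2) by force
      have "separated t e (insert x F)" unfolding separated_def
      proof (intro conjI ballI impI)
        show "finite (insert x F)" "insert x F \<subseteq> X" using F(1) x by (auto simp: separated_def)
        fix a b assume ab: "a \<in> insert x F" "b \<in> insert x F" "a \<noteq> b"
        show "e \<le> D t a b"
        proof (cases "a = x")
          case True
          then show ?thesis using ab h by auto
        next
          case ax: False
          show ?thesis
          proof (cases "b = x")
            case True
            then show ?thesis using ab ax h bd_sym[of t a x] by auto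
          next
            case False
            then show ?thesis using ab ax F(1) unfolding separated_def by blast
          qed
        qed
      qed
      from sep_upper[OF assms this] have "card (insert x F) \<le> card F" using F(2) by simp
      then show False using \<open>x \<notin> F\<close> F(1) by (simp add: separated_def)
    qed
  qed
  from span_le[OF this] show ?thesis using F(2) by simp
qed

lemma sep_le_span: assumes "0 \<le> t" "0 < e" shows "sep_num \<phi> X t e \<le> span_num \<phi> X t (e/2)"
proof -
  obtain F where F: "separated t e F" "card F = sep_num \<phi> X t e" using sep_attain[OF assms] by blast
  show ?thesis using sep_bound[OF assms F(1)] F(2) by simp
qed

lemma diam_le: "(\<And>x y. x \<in> U \<Longrightarrow> y \<in> U \<Longrightarrow> D t x y \<le> c) \<Longrightarrow> bowen_diam \<phi> t U \<le> ereal c"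
  unfolding bowen_diam_def by (rule SUP_least) auto

lemma diam_ge: "x \<in> U \<Longrightarrow> y \<in> U \<Longrightarrow> ereal (D t x y) \<le> bowen_diam \<phi> t U"
  unfolding bowen_diam_def by (rule SUP_upper2[of "(x,y)"]) auto

lemma cover_of_span: assumes "0 \<le> t" "0 < e" "spanning t e E"
  shows "goodcov t (3*e) ((\<lambda>y. {x\<in>X. D t x y < e}) ` E)"
  unfolding goodcov_def
proof (intro conjI ballI)
  show "finite ((\<lambda>y. {x\<in>X. D t x y < e}) ` E)" using assms(3) by (auto simp: spanning_def)
  show "X \<subseteq> \<Union> ((\<lambda>y. {x\<in>X. D t x y < e}) ` E)" using assms(3) by (auto simp: spanning_def)
  fix U assume "U \<in> (\<lambda>y. {x\<in>X. D t x y < e}) ` E"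
  then obtain y where y: "y \<in> E" "U = {x\<in>X. D t x y < e}" by auto
  have yX: "y \<in> X" using y assms(3) by (auto simp: spanning_def)
  show "openin (top_of_set X) U" using y(2) ball_open[OF assms(1) yX] by simp
  have "bowen_diam \<phi> t U \<le> ereal (2*e)"
  proof (rule diam_le)
    fix p q assume "p \<in> U" "q \<in> U"
    then have pq: "p \<in> X" "q \<in> X" "D t p y < e" "D t q y < e" using y by auto
    have "D t p q \<le> D t p y + D t y q" using pq yX assms(1) by (intro bd_tri) auto
    then show "D t p q \<le> 2*e" using pq bd_sym[of t y q] by auto
  qed
  also have "\<dots> < ereal (3*e)" using assms(2) by simp
  finally show "bowen_diam \<phi> t U < ereal (3*e)" .
qed

lemma cover_le: "goodcov t e \<U> \<Longrightarrow> cover_num \<phi> X t e \<le> card \<U>"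
  unfolding cover_num_eq by (rule cInf_lower) auto

lemma cover_le_span: assumes "0 \<le> t" "0 < e" shows "cover_num \<phi> X t (3*e) \<le> span_num \<phi> X t e"
proof -
  obtain E where E: "spanning t e E" "card E = span_num \<phi> X t e" using span_attain[OF assms] by blast
  have "cover_num \<phi> X t (3*e) \<le> card ((\<lambda>y. {x\<in>X. D t x y < e}) ` E)"
    by (rule cover_le[OF cover_of_span[OF assms E(1)]])
  also have "\<dots> \<le> card E" using E(1) by (intro card_image_le) (auto simp: spanning_def)
  finally show ?thesis using E(2) by simp
qed

lemma cover_exists: assumes "0 \<le> t" "0 < e" shows "\<exists>\<U>. goodcov t e \<U>"
proof -
  obtain E where "spanning t (e/3) E" using span_exists[OF assms(1), of "e/3"] assms by auto
  from cover_of_span[OF assms(1) _ this] assms show ?thesis by auto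
qed

lemma cover_attain: assumes "0 \<le> t" "0 < e"
  shows "\<exists>\<U>. goodcov t e \<U> \<and> card \<U> = cover_num \<phi> X t e"
proof -
  have "card ` Collect (goodcov t e) \<noteq> {}" using cover_exists[OF assms] by auto
  from Inf_nat_def1[OF this] show ?thesis unfolding cover_num_eq by auto
qed

lemma span_le_cover: assumes "0 \<le> t" "0 < e" shows "span_num \<phi> X t e \<le> cover_num \<phi> X t e"
proof -
  obtain \<U> where U: "goodcov t e \<U>" "card \<U> = cover_num \<phi> X t e" using cover_attain[OF assms] by blast
  define g where "g U = (SOME x. x \<in> U)" for U :: "'a set"
  let ?E = "g ` {U\<in>\<U>. U \<noteq> {}}"
  have sub: "U \<subseteq> X" if "U \<in> \<U>" for U using U(1) that openin_imp_subset by (auto simp: goodcov_def)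
  have g: "g U \<in> U" if "U \<noteq> {}" for U using that unfolding g_def by (simp add: some_in_eq)
  have "spanning t e ?E" unfolding spanning_def
  proof (intro conjI ballI)
    show "finite ?E" using U(1) by (auto simp: goodcov_def)
    show "?E \<subseteq> X" using g sub by blast
    fix x assume x: "x \<in> X"
    then obtain U where u: "U \<in> \<U>" "x \<in> U" using U(1) by (auto simp: goodcov_def)
    have "ereal (D t x (g U)) \<le> bowen_diam \<phi> t U" using u g by (intro diam_ge) auto
    also have "\<dots> < ereal e" using U(1) u by (auto simp: goodcov_def)
    finally show "\<exists>y\<in>?E. D t x y < e" using u by (intro bexI[of _ "g U"]) auto
  qed
  then have "span_num \<phi> X t e \<le> card ?E" by (rule span_le)
  also have "\<dots> \<le> card {U\<in>\<U>. U \<noteq> {}}" using U(1) by (intro card_image_le) (auto simp: goodcov_def)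
  also have "\<dots> \<le> card \<U>" using U(1) by (intro card_mono) (auto simp: goodcov_def)
  finally show ?thesis using U(2) by simp
qed

lemma cover_pos: assumes "X \<noteq> {}" "0 \<le> t" "0 < e" shows "cover_num \<phi> X t e \<ge> 1"
  using span_le_cover[OF assms(2,3)] span_pos[OF assms] by linarith

lemma cover_mono: assumes "0 \<le> t" "t \<le> t'" "0 < e" shows "cover_num \<phi> X t e \<le> cover_num \<phi> X t' e"
proof -
  obtain \<U> where U: "goodcov t' e \<U>" "card \<U> = cover_num \<phi> X t' e"
    using cover_attain[of t' e] assms by auto
  have "goodcov t e \<U>" unfolding goodcov_def
  proof (intro conjI ballI)
    show "finite \<U>" "X \<subseteq> \<Union>\<U>" using U(1) by (auto simp: goodcov_def)
    fix U assume u: "U \<in> \<U>"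
    show "openin (top_of_set X) U" using U(1) u by (auto simp: goodcov_def)
    have sub: "U \<subseteq> X" using U(1) u openin_imp_subset by (auto simp: goodcov_def)
    have "bowen_diam \<phi> t U \<le> bowen_diam \<phi> t' U"
      unfolding bowen_diam_def
    proof (rule SUP_least)
      fix p assume p: "p \<in> U \<times> U"
      have "ereal (D t (fst p) (snd p)) \<le> ereal (D t' (fst p) (snd p))"
        using p sub assms by (auto intro!: bd_mono)
      also have "\<dots> \<le> (SUP p\<in>U \<times> U. ereal (D t' (fst p) (snd p)))" using p by (rule SUP_upper)
      finally show "ereal (D t (fst p) (snd p)) \<le> (SUP p\<in>U \<times> U. ereal (D t' (fst p) (snd p)))" .
    qed
    also have "\<dots> < ereal e" using U(1) u by (auto simp: goodcov_def)
    finally show "bowen_diam \<phi> t U < ereal e" .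
  qed
  from cover_le[OF this] show ?thesis using U(2) by simp
qed

lemma cover_submult: assumes "0 \<le> t" "0 \<le> s" "0 < e"
  shows "cover_num \<phi> X (t+s) e \<le> cover_num \<phi> X t e * cover_num \<phi> X s e"
proof -
  obtain \<U> where U: "goodcov t e \<U>" "card \<U> = cover_num \<phi> X t e" using cover_attain assms by blast
  obtain \<V> where V: "goodcov s e \<V>" "card \<V> = cover_num \<phi> X s e" using cover_attain assms by blast
  define W where "W = (\<lambda>(U,V). U \<inter> {x\<in>X. \<phi> x t \<in> V}) ` (\<U> \<times> \<V>)"
  have "goodcov (t+s) e W" unfolding goodcov_def
  proof (intro conjI ballI)
    show "finite W" using U(1) V(1) by (auto simp: goodcov_def W_def)
    show "X \<subseteq> \<Union>W"
    proof
      fix x assume x: "x \<in> X"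
      then obtain A where A: "A \<in> \<U>" "x \<in> A" using U(1) by (auto simp: goodcov_def)
      have "\<phi> x t \<in> X" using phi_in[OF x] .
      then obtain B where B: "B \<in> \<V>" "\<phi> x t \<in> B" using V(1) unfolding goodcov_def by blast
      have "A \<inter> {x\<in>X. \<phi> x t \<in> B} \<in> W" unfolding W_def using A(1) B(1) by force
      moreover have "x \<in> A \<inter> {x\<in>X. \<phi> x t \<in> B}" using A B x by blast
      ultimately show "x \<in> \<Union>W" by blast
    qed
    fix Q assume "Q \<in> W"
    then obtain A B where AB: "A \<in> \<U>" "B \<in> \<V>" "Q = A \<inter> {x\<in>X. \<phi> x t \<in> B}" unfolding W_def by auto
    have oA: "openin (top_of_set X) A" and oB: "openin (top_of_set X) B"
      using U(1) V(1) AB by (auto simp: goodcov_def)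
    have "openin (top_of_set X) (X \<inter> (\<lambda>x. \<phi> x t) -` B)"
      by (rule continuous_openin_preimage[OF cont_x _ oB]) (auto intro: phi_in)
    moreover have "{x\<in>X. \<phi> x t \<in> B} = X \<inter> (\<lambda>x. \<phi> x t) -` B" by auto
    ultimately show "openin (top_of_set X) Q" using AB(3) oA by (auto intro: openin_Int)
    have Asub: "A \<subseteq> X" using oA openin_imp_subset by auto
    have "bowen_diam \<phi> (t+s) Q \<le> max (bowen_diam \<phi> t A) (bowen_diam \<phi> s B)"
      unfolding bowen_diam_def[of _ "t+s"]
    proof (rule SUP_least)
      fix p assume "p \<in> Q \<times> Q"
      then obtain x y where p: "p = (x,y)" "x \<in> A" "y \<in> A" "x \<in> X" "y \<in> X" "\<phi> x t \<in> B" "\<phi> y t \<in> B"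
        using AB(3) by auto
      have "D (t+s) x y \<le> max (D t x y) (D s (\<phi> x t) (\<phi> y t))" using p assms by (intro bd_split) auto
      moreover have "ereal (D t x y) \<le> bowen_diam \<phi> t A" using p by (intro diam_ge)
      moreover have "ereal (D s (\<phi> x t) (\<phi> y t)) \<le> bowen_diam \<phi> s B" using p by (intro diam_ge)
      ultimately have "ereal (D (t+s) x y) \<le> max (bowen_diam \<phi> t A) (bowen_diam \<phi> s B)"
      proof -
        assume a1: "D (t+s) x y \<le> max (D t x y) (D s (\<phi> x t) (\<phi> y t))"
          and a2: "ereal (D t x y) \<le> bowen_diam \<phi> t A"
          and a3: "ereal (D s (\<phi> x t) (\<phi> y t)) \<le> bowen_diam \<phi> s B"
        have "ereal (D (t+s) x y) \<le> ereal (max (D t x y) (D s (\<phi> x t) (\<phi> y t)))" by (subst ereal_less_eq(3)) (rule a1)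
        also have "\<dots> = max (ereal (D t x y)) (ereal (D s (\<phi> x t) (\<phi> y t)))" by (simp add: max_def)
        also have "\<dots> \<le> max (bowen_diam \<phi> t A) (bowen_diam \<phi> s B)" using a2 a3 by (rule max.mono)
        finally show ?thesis .
      qed
      then show "ereal (D (t+s) (fst p) (snd p)) \<le> max (bowen_diam \<phi> t A) (bowen_diam \<phi> s B)"
        using p(1) by simp
    qed
    also have "\<dots> < ereal e" using U(1) V(1) AB by (auto simp: goodcov_def)
    finally show "bowen_diam \<phi> (t+s) Q < ereal e" .
  qed
  then have "cover_num \<phi> X (t+s) e \<le> card W" by (rule cover_le)
  also have "\<dots> \<le> card (\<U> \<times> \<V>)" unfolding W_def using U(1) V(1)
    by (intro card_image_le) (auto simp: goodcov_def)
  also have "\<dots> = card \<U> * card \<V>" by (rule card_cartesian_product)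
  finally show ?thesis using U(2) V(2) by simp
qed

end


lemma fekete_mult:
  fixes f :: "real \<Rightarrow> real"
  assumes sub: "\<And>s t. 0 \<le> s \<Longrightarrow> 0 \<le> t \<Longrightarrow> f (s + t) \<le> f s + f t" and T: "0 \<le> T"
  shows "f (real (Suc m) * T) \<le> real (Suc m) * f T"
proof (induction m)
  case 0 then show ?case by simp
next
  case (Suc m)
  have "f (real (Suc (Suc m)) * T) = f (real (Suc m) * T + T)" by (simp add: algebra_simps)
  also have "\<dots> \<le> f (real (Suc m) * T) + f T" using T by (intro sub) auto
  also have "\<dots> \<le> real (Suc m) * f T + f T" using Suc by simp
  also have "\<dots> = real (Suc (Suc m)) * f T" by (simp add: algebra_simps)
  finally show ?case .
qed

lemma fekete:
  fixes f :: "real \<Rightarrow> real"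
  assumes nn: "\<And>t. 0 \<le> t \<Longrightarrow> 0 \<le> f t"
    and mono: "\<And>s t. 0 \<le> s \<Longrightarrow> s \<le> t \<Longrightarrow> f s \<le> f t"
    and sub: "\<And>s t. 0 \<le> s \<Longrightarrow> 0 \<le> t \<Longrightarrow> f (s + t) \<le> f s + f t"
  shows "((\<lambda>t. f t / t) \<longlongrightarrow> Inf ((\<lambda>t. f t / t) ` {0<..})) at_top"
proof -
  define S where "S = (\<lambda>t. f t / t) ` {0<..}"
  define L where "L = Inf S"
  have bdd: "bdd_below S" unfolding S_def bdd_below_def using nn
    by (intro exI[of _ 0]) (auto intro!: divide_nonneg_pos)
  have ne: "S \<noteq> {}" unfolding S_def by auto
  have lower: "L \<le> f t / t" if "t > 0" for t
    unfolding L_def using bdd that by (intro cInf_lower) (auto simp: S_def)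
  show ?thesis unfolding L_def[symmetric] S_def[symmetric]
  proof (rule order_tendstoI)
    fix a assume "a < L"
    show "eventually (\<lambda>t. a < f t / t) at_top"
      using eventually_gt_at_top[of 0]
    proof eventually_elim
      fix t :: real assume "0 < t"
      from lower[OF this] \<open>a < L\<close> show "a < f t / t" by linarith
    qed
  next
    fix a assume aL: "L < a"
    define \<epsilon> where "\<epsilon> = (a - L) / 2"
    have ep: "\<epsilon> > 0" using aL by (simp add: \<epsilon>_def)
    have "Inf S < L + \<epsilon>" using ep by (simp add: L_def)
    then obtain y where "y \<in> S" "y < L + \<epsilon>" using cInf_less_iff[OF ne bdd] by blast
    then obtain T where T: "T > 0" "f T / T < L + \<epsilon>" unfolding S_def by auto
    have fT: "0 \<le> f T" using nn T by auto
    have ev: "eventually (\<lambda>t. t \<ge> max T (f T / \<epsilon> + 1)) at_top" by (rule eventually_ge_at_top)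
    then show "eventually (\<lambda>t. f t / t < a) at_top"
    proof eventually_elim
      fix t assume t: "max T (f T / \<epsilon> + 1) \<le> t"
      have tpos: "t > 0" using t T by auto
      define n where "n = nat \<lfloor>t / T\<rfloor>"
      have tT: "t / T \<ge> 0" using tpos T by auto
      have nle: "real n \<le> t / T" unfolding n_def using tT by linarith
      have ngt: "t / T < real n + 1" unfolding n_def using tT by linarith
      have "t < (real n + 1) * T" using ngt T by (simp add: field_simps)
      then have "t \<le> real (Suc n) * T" by (simp add: add.commute)
      then have "f t \<le> f (real (Suc n) * T)" using tpos by (intro mono) auto
      also have "\<dots> \<le> real (Suc n) * f T" using fekete_mult[of f T n] sub T by auto
      also have "\<dots> \<le> (t / T + 1) * f T" using nle fT by (intro mult_right_mono) auto
      finally have "f t / t \<le> (t / T + 1) * f T / t" using tpos by (simp add: divide_right_mono)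
      also have "\<dots> = f T / T + f T / t" using tpos T by (simp add: field_simps)
      also have "f T / t < \<epsilon>"
      proof -
        have "f T / \<epsilon> < t" using t by auto
        then have "f T < t * \<epsilon>" using ep by (simp add: field_simps)
        then show ?thesis using tpos by (simp add: field_simps)
      qed
      then have "f T / T + f T / t < L + \<epsilon> + \<epsilon>" using T(2) by linarith
      finally show "f t / t < a" by (simp add: \<epsilon>_def)
    qed
  qed
qed

lemma eps_bound:
  fixes x L :: ereal
  assumes "\<And>c::real. c > 1 \<Longrightarrow> x \<le> L * ereal c" "0 \<le> L"
  shows "x \<le> L"
proof (cases L)
  case PInf then show ?thesis by simp
next
  case MInf then show ?thesis using assms by simp
next
  case (real l)
  have l: "l \<ge> 0" using assms(2) real by simp
  show ?thesis
  proof (rule ereal_le_epsilon2)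
    fix e :: real assume e: "e > 0"
    define c where "c = 1 + e / (l + 1)"
    have c: "c > 1" using e l by (simp add: c_def)
    have "l * c = l + l * e / (l + 1)" by (simp add: c_def algebra_simps)
    also have "l * e / (l + 1) \<le> e"
    proof -
      have "l * e \<le> (l + 1) * e" using e by simp
      then show ?thesis using l by (simp add: field_simps)
    qed
    then have "l * c \<le> l + e" by (simp add: c_def algebra_simps)
    moreover have "x \<le> ereal (l * c)" using assms(1)[OF c] real by simp
    ultimately have "x \<le> ereal (l + e)" by (meson ereal_less_eq(3) order.trans)
    then show "x \<le> L + ereal e" using real by simp
  qed
qed

lemma ev_small:
  fixes c :: real assumes c: "c > 1"
  shows "eventually (\<lambda>e. 0 < e \<and> e < 1 \<and> ln (1 / (e/3)) \<le> c * ln (1 / e)) (at_right 0)"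
proof -
  define b where "b = min 1 (exp (- ln 3 / (c - 1)))"
  have b: "b > 0" by (simp add: b_def)
  show ?thesis unfolding eventually_at_right_field
  proof (intro exI[of _ b] conjI allI impI b)
    fix e :: real assume e: "0 < e" "e < b"
    show "0 < e" by fact
    show "e < 1" using e by (simp add: b_def)
    have "e < exp (- ln 3 / (c - 1))" using e by (simp add: b_def)
    then have "ln e < ln (exp (- ln 3 / (c - 1)))" using e by (subst ln_less_cancel_iff) auto
    then have "ln e < - ln 3 / (c - 1)" by simp
    then have "ln e * (c - 1) < - ln 3" using c by (simp add: field_simps)
    then have "ln 3 - ln e \<le> c * (- ln e)" by (simp add: algebra_simps)
    moreover have "ln (1 / (e/3)) = ln 3 - ln e" using e by (simp add: ln_div)
    moreover have "ln (1 / e) = - ln e" using e by (simp add: ln_div)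
    ultimately show "ln (1 / (e/3)) \<le> c * ln (1 / e)" by simp
  qed
qed


lemma ev_small2: "eventually (\<lambda>e. 0 < e \<and> e < 1 \<and> ln (1 / (e/3)) \<le> 2 * ln (1 / e)) (at_right (0::real))"
  by (rule ev_small) simp

lemma ediv_eq: "(q::real) \<noteq> 0 \<Longrightarrow> x / ereal q = x * ereal (1 / q)"
  by (simp add: divide_ereal_def divide_real_def)

lemma at_right_div3: "filtermap (\<lambda>e. e / 3) (at_right (0::real)) = at_right 0"
proof -
  have "(\<lambda>e::real. e / 3) = times (1/3)" by (auto simp: fun_eq_iff)
  then show ?thesis using filtermap_times_pos_at_right[of "1/3::real" 0] by simp
qed

lemma inj_div3: "inj (\<lambda>e::real. e / 3)"
  by (auto simp: inj_on_def)

lemma sandwich_key: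
  fixes R A :: "real \<Rightarrow> ereal" and c :: real
  assumes R0: "\<And>e. 0 < e \<Longrightarrow> 0 \<le> R e"
    and hi: "\<And>e. 0 < e \<Longrightarrow> A e \<le> R (e/3)" and c: "c > 1"
  shows "eventually (\<lambda>e. A e / ereal (ln (1/e)) \<le> (R (e/3) / ereal (ln (1/(e/3)))) * ereal c) (at_right 0)"
  using ev_small[OF c]
proof eventually_elim
  fix e :: real assume e: "0 < e \<and> e < 1 \<and> ln (1 / (e/3)) \<le> c * ln (1 / e)"
  define q where "q = ln (1/e)"
  define q3 where "q3 = ln (1/(e/3))"
  have q: "q > 0" using e by (simp add: q_def)
  have q3: "q3 > 0" using e by (simp add: q3_def)
  have qq: "q3 \<le> c * q" using e by (simp add: q_def q3_def)
  have "A e / ereal q \<le> R (e/3) / ereal q" using hi[of e] e q by (intro ereal_divide_right_mono) auto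
  also have "\<dots> = R (e/3) * ereal (1/q)" using q by (simp add: ediv_eq)
  also have "\<dots> \<le> R (e/3) * ereal (c / q3)"
  proof (rule ereal_mult_left_mono)
    show "0 \<le> R (e/3)" using R0 e by simp
    have "1 / q \<le> c / q3" using q q3 qq by (simp add: divide_simps mult.commute)
    then show "ereal (1/q) \<le> ereal (c/q3)" by simp
  qed
  also have "\<dots> = (R (e/3) / ereal q3) * ereal c" using q3 by (simp add: ediv_eq mult.assoc)
  finally show "A e / ereal (ln (1/e)) \<le> (R (e/3) / ereal (ln (1/(e/3)))) * ereal c"
    by (simp add: q_def q3_def)
qed

lemma h_nonneg:
  fixes R :: "real \<Rightarrow> ereal"
  assumes R0: "\<And>e. 0 < e \<Longrightarrow> 0 \<le> R e"
  shows "eventually (\<lambda>e. 0 \<le> R e / ereal (ln (1/e))) (at_right 0)"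
  using ev_small2
proof eventually_elim
  fix e :: real assume e: "0 < e \<and> e < 1 \<and> ln (1 / (e/3)) \<le> 2 * ln (1 / e)"
  have "ln (1/e) > 0" using e by simp
  then show "0 \<le> R e / ereal (ln (1/e))" using R0[of e] e by simp
qed

lemma sandwich_Limsup:
  fixes R A :: "real \<Rightarrow> ereal"
  assumes R0: "\<And>e. 0 < e \<Longrightarrow> 0 \<le> R e"
    and lo: "\<And>e. 0 < e \<Longrightarrow> R e \<le> A e" and hi: "\<And>e. 0 < e \<Longrightarrow> A e \<le> R (e/3)"
  shows "Limsup (at_right 0) (\<lambda>e. A e / ereal (ln (1/e))) = Limsup (at_right 0) (\<lambda>e. R e / ereal (ln (1/e)))"
proof (rule antisym)
  define h where "h e = R e / ereal (ln (1/e))" for e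
  have h0: "0 \<le> Limsup (at_right 0) h"
    using h_nonneg[OF R0] by (intro le_Limsup) (auto simp: h_def)
  show "Limsup (at_right 0) (\<lambda>e. A e / ereal (ln (1/e))) \<le> Limsup (at_right 0) (\<lambda>e. R e / ereal (ln (1/e)))"
    unfolding h_def[symmetric]
  proof (rule eps_bound[OF _ h0])
    fix c :: real assume c: "c > 1"
    have "Limsup (at_right 0) (\<lambda>e. A e / ereal (ln (1/e))) \<le> Limsup (at_right 0) (\<lambda>e. h (e/3) * ereal c)"
      using sandwich_key[of R A c, OF R0 hi c] unfolding h_def by (rule Limsup_mono)
    also have "\<dots> = Limsup (at_right 0) (\<lambda>e. h (e/3)) * ereal c"
      using c by (intro Limsup_ereal_mult_right) auto
    also have "Limsup (at_right 0) (\<lambda>e. h (e/3)) = Limsup (at_right 0) h"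
      using Limsup_filtermap_eq[OF inj_div3, of "at_right 0" h] at_right_div3 by simp
    finally show "Limsup (at_right 0) (\<lambda>e. A e / ereal (ln (1/e))) \<le> Limsup (at_right 0) h * ereal c" .
  qed
  show "Limsup (at_right 0) (\<lambda>e. R e / ereal (ln (1/e))) \<le> Limsup (at_right 0) (\<lambda>e. A e / ereal (ln (1/e)))"
    using ev_small2
  proof (intro Limsup_mono, eventually_elim)
    fix e :: real assume e: "0 < e \<and> e < 1 \<and> ln (1 / (e/3)) \<le> 2 * ln (1 / e)"
    have "ln (1/e) > 0" using e by simp
    then show "R e / ereal (ln (1/e)) \<le> A e / ereal (ln (1/e))" using lo[of e] e
      by (intro ereal_divide_right_mono) auto
  qed
qed

lemma sandwich_Liminf:
  fixes R A :: "real \<Rightarrow> ereal"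
  assumes R0: "\<And>e. 0 < e \<Longrightarrow> 0 \<le> R e"
    and lo: "\<And>e. 0 < e \<Longrightarrow> R e \<le> A e" and hi: "\<And>e. 0 < e \<Longrightarrow> A e \<le> R (e/3)"
  shows "Liminf (at_right 0) (\<lambda>e. A e / ereal (ln (1/e))) = Liminf (at_right 0) (\<lambda>e. R e / ereal (ln (1/e)))"
proof (rule antisym)
  define h where "h e = R e / ereal (ln (1/e))" for e
  have h0: "0 \<le> Liminf (at_right 0) h"
    using h_nonneg[OF R0] by (intro Liminf_bounded) (auto simp: h_def)
  show "Liminf (at_right 0) (\<lambda>e. A e / ereal (ln (1/e))) \<le> Liminf (at_right 0) (\<lambda>e. R e / ereal (ln (1/e)))"
    unfolding h_def[symmetric]
  proof (rule eps_bound[OF _ h0])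
    fix c :: real assume c: "c > 1"
    have "Liminf (at_right 0) (\<lambda>e. A e / ereal (ln (1/e))) \<le> Liminf (at_right 0) (\<lambda>e. h (e/3) * ereal c)"
      using sandwich_key[of R A c, OF R0 hi c] unfolding h_def by (rule Liminf_mono)
    also have "\<dots> = Liminf (at_right 0) (\<lambda>e. h (e/3)) * ereal c"
      using c by (intro Liminf_ereal_mult_right) auto
    also have "Liminf (at_right 0) (\<lambda>e. h (e/3)) = Liminf (at_right 0) h"
      using Liminf_filtermap_eq[OF inj_div3, of "at_right 0" h] at_right_div3 by simp
    finally show "Liminf (at_right 0) (\<lambda>e. A e / ereal (ln (1/e))) \<le> Liminf (at_right 0) h * ereal c" .
  qed
  show "Liminf (at_right 0) (\<lambda>e. R e / ereal (ln (1/e))) \<le> Liminf (at_right 0) (\<lambda>e. A e / ereal (ln (1/e)))"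
    using ev_small2
  proof (intro Liminf_mono, eventually_elim)
    fix e :: real assume e: "0 < e \<and> e < 1 \<and> ln (1 / (e/3)) \<le> 2 * ln (1 / e)"
    have "ln (1/e) > 0" using e by simp
    then show "R e / ereal (ln (1/e)) \<le> A e / ereal (ln (1/e))" using lo[of e] e
      by (intro ereal_divide_right_mono) auto
  qed
qed


lemma ln_nat_mono: "1 \<le> (a::nat) \<Longrightarrow> a \<le> b \<Longrightarrow> ln (real a) \<le> ln (real b)"
  by simp

theorem proposition2p3:
  fixes X :: "'a::metric_space set" and \<phi> :: "'a \<Rightarrow> real \<Rightarrow> 'a"
  assumes "compact X" and "flow X \<phi>"
  shows "(\<forall>\<epsilon>>0. \<exists>L. ((\<lambda>t. ln (real (cover_num \<phi> X t \<epsilon>)) / t) \<longlongrightarrow> L) at_top)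
    \<and> upper_mmdim \<phi> X =
        Limsup (at_right 0) (\<lambda>\<epsilon>. ereal (Lim at_top (\<lambda>t. ln (real (cover_num \<phi> X t \<epsilon>)) / (t * ln (1 / \<epsilon>)))))
    \<and> upper_mmdim \<phi> X =
        Limsup (at_right 0) (\<lambda>\<epsilon>. Limsup at_top (\<lambda>t. ereal (ln (real (sep_num \<phi> X t \<epsilon>)) / (t * ln (1 / \<epsilon>)))))
    \<and> lower_mmdim \<phi> X =
        Liminf (at_right 0) (\<lambda>\<epsilon>. ereal (Lim at_top (\<lambda>t. ln (real (cover_num \<phi> X t \<epsilon>)) / (t * ln (1 / \<epsilon>)))))
    \<and> lower_mmdim \<phi> X =
        Liminf (at_right 0) (\<lambda>\<epsilon>. Limsup at_top (\<lambda>t. ereal (ln (real (sep_num \<phi> X t \<epsilon>)) / (t * ln (1 / \<epsilon>)))))"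
proof -
  interpret cflow X \<phi> by unfold_locales (rule assms)+
  show ?thesis
  proof (cases "X = {}")
    case True
    have cz: "cover_num \<phi> X t e = 0" for t e
    proof -
      have "goodcov t e {}" unfolding goodcov_def using True by simp
      from cover_le[OF this] show ?thesis by simp
    qed
    have sz: "span_num \<phi> X t e = 0" for t e
    proof -
      have "spanning t e {}" unfolding spanning_def using True by simp
      from span_le[OF this] show ?thesis by simp
    qed
    have pz: "sep_num \<phi> X t e = 0" for t e
    proof -
      have "Collect (separated t e) = {{}}" unfolding separated_def using True by auto
      then show ?thesis unfolding sep_num_eq by simp
    qed
    have L0: "Lim at_top (\<lambda>t::real. 0::real) = 0" by (rule tendsto_Lim) auto
    have Z1: "Limsup at_top (\<lambda>t::real. 0::ereal) = 0" by (rule Limsup_const) simp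
    have Z2: "Limsup (at_right (0::real)) (\<lambda>t. 0::ereal) = 0" by (rule Limsup_const) simp
    have Z3: "Liminf (at_right (0::real)) (\<lambda>t. 0::ereal) = 0" by (rule Liminf_const) simp
    show ?thesis unfolding upper_mmdim_def lower_mmdim_def span_rate_def cz sz pz
      by (simp add: L0 zero_ereal_def[symmetric] Z1 Z2 Z3) (blast intro: tendsto_const)
  next
    case ne: False
    define Lc where "Lc e = Inf ((\<lambda>t. ln (real (cover_num \<phi> X t e)) / t) ` {0<..})" for e
    define P where "P e = Limsup at_top (\<lambda>t. ereal (ln (real (sep_num \<phi> X t e)) / t))" for e
    define R where "R e = span_rate \<phi> X e" for e
    have fek: "((\<lambda>t. ln (real (cover_num \<phi> X t e)) / t) \<longlongrightarrow> Lc e) at_top" if e: "e > 0" for e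
      unfolding Lc_def
    proof (rule fekete)
      fix t :: real assume "0 \<le> t"
      then show "0 \<le> ln (real (cover_num \<phi> X t e))" using cover_pos[OF ne _ e] by simp
    next
      fix s t :: real assume "0 \<le> s" "s \<le> t"
      then show "ln (real (cover_num \<phi> X s e)) \<le> ln (real (cover_num \<phi> X t e))"
        using cover_pos[OF ne _ e] cover_mono[OF _ _ e] by (intro ln_nat_mono) auto
    next
      fix s t :: real assume st: "0 \<le> s" "0 \<le> t"
      have p: "cover_num \<phi> X s e \<ge> 1" "cover_num \<phi> X t e \<ge> 1" "cover_num \<phi> X (s+t) e \<ge> 1"
        using cover_pos[OF ne _ e] st by auto
      have "ln (real (cover_num \<phi> X (s+t) e)) \<le> ln (real (cover_num \<phi> X s e * cover_num \<phi> X t e))"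
        using p cover_submult[OF st e] by (intro ln_nat_mono) auto
      also have "\<dots> = ln (real (cover_num \<phi> X s e)) + ln (real (cover_num \<phi> X t e))"
        using p by (simp add: ln_mult)
      finally show "ln (real (cover_num \<phi> X (s+t) e)) \<le> ln (real (cover_num \<phi> X s e)) + ln (real (cover_num \<phi> X t e))" .
    qed
    have c1: "\<forall>\<epsilon>>0. \<exists>L. ((\<lambda>t. ln (real (cover_num \<phi> X t \<epsilon>)) / t) \<longlongrightarrow> L) at_top"
      using fek by blast
    have LcLim: "Limsup at_top (\<lambda>t. ereal (ln (real (cover_num \<phi> X t e)) / t)) = ereal (Lc e)" if "e > 0" for e
      by (rule lim_imp_Limsup) (use fek[OF that] in auto)
    have R0: "0 \<le> R e" if e: "e > 0" for e
      unfolding R_def span_rate_def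
    proof (rule le_Limsup)
      show "eventually (\<lambda>t. 0 \<le> ereal (ln (real (span_num \<phi> X t e)) / t)) at_top"
        using eventually_gt_at_top[of "0::real"]
      proof eventually_elim
        fix t :: real assume "0 < t"
        then show "0 \<le> ereal (ln (real (span_num \<phi> X t e)) / t)" using span_pos[OF ne _ e] by simp
      qed
    qed simp
    have ev_le: "Limsup at_top (\<lambda>t. ereal (ln (real (f t)) / t)) \<le> Limsup at_top (\<lambda>t. ereal (ln (real (g t)) / t))"
      if "\<And>t. 0 \<le> t \<Longrightarrow> 1 \<le> f t \<and> f t \<le> g t" for f g :: "real \<Rightarrow> nat"
      using eventually_gt_at_top[of "0::real"]
    proof (intro Limsup_mono, eventually_elim)
      fix t :: real assume t: "0 < t"
      then have "ln (real (f t)) \<le> ln (real (g t))" using that[of t] by (intro ln_nat_mono) auto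
      then show "ereal (ln (real (f t)) / t) \<le> ereal (ln (real (g t)) / t)" using t
        by (simp add: divide_right_mono)
    qed
    have sC1: "R e \<le> ereal (Lc e)" if e: "e > 0" for e
      unfolding R_def span_rate_def LcLim[OF e, symmetric]
      by (rule ev_le) (use span_pos[OF ne _ e] span_le_cover[OF _ e] in auto)
    have sC2: "ereal (Lc e) \<le> R (e/3)" if e: "e > 0" for e
    proof -
      have e3: "e/3 > 0" using e by simp
      show ?thesis unfolding R_def span_rate_def LcLim[OF e, symmetric]
        by (rule ev_le) (use cover_pos[OF ne _ e] cover_le_span[OF _ e3] in auto)
    qed
    have sP1: "R e \<le> P e" if e: "e > 0" for e
      unfolding R_def span_rate_def P_def
      by (rule ev_le) (use span_pos[OF ne _ e] span_le_sep[OF _ e] in auto)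
    have sP2: "P e \<le> R (e/3)" if e: "e > 0" for e
    proof -
      have e3: "e/3 > 0" "e/3 \<le> e/2" using e by auto
      have "sep_num \<phi> X t e \<le> span_num \<phi> X t (e/3)" if "0 \<le> t" for t
        using sep_le_span[OF that e] span_anti[OF that e3] by simp
      moreover have "sep_num \<phi> X t e \<ge> 1" if "0 \<le> t" for t
        using span_le_sep[OF that e] span_pos[OF ne that e] by simp
      ultimately show ?thesis unfolding R_def span_rate_def P_def
        by (intro ev_le) auto
    qed
    have Cl_eq: "eventually (\<lambda>e. ereal (Lim at_top (\<lambda>t. ln (real (cover_num \<phi> X t e)) / (t * ln (1 / e))))
        = ereal (Lc e) / ereal (ln (1/e))) (at_right 0)"
      using ev_small2
    proof eventually_elim
      fix e :: real assume e: "0 < e \<and> e < 1 \<and> ln (1 / (e/3)) \<le> 2 * ln (1 / e)"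
      have q: "ln (1/e) > 0" using e by simp
      have "((\<lambda>t. ln (real (cover_num \<phi> X t e)) / t / ln (1/e)) \<longlongrightarrow> Lc e / ln (1/e)) at_top"
        using fek[of e] e q by (intro tendsto_divide tendsto_const) auto
      then have "Lim at_top (\<lambda>t. ln (real (cover_num \<phi> X t e)) / (t * ln (1 / e))) = Lc e / ln (1/e)"
        by (intro tendsto_Lim) (auto simp: divide_divide_eq_left)
      then show "ereal (Lim at_top (\<lambda>t. ln (real (cover_num \<phi> X t e)) / (t * ln (1 / e))))
        = ereal (Lc e) / ereal (ln (1/e))" using q by simp
    qed
    have Sl_eq: "eventually (\<lambda>e. Limsup at_top (\<lambda>t. ereal (ln (real (sep_num \<phi> X t e)) / (t * ln (1 / e))))
        = P e / ereal (ln (1/e))) (at_right 0)"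
      using ev_small2
    proof eventually_elim
      fix e :: real assume e: "0 < e \<and> e < 1 \<and> ln (1 / (e/3)) \<le> 2 * ln (1 / e)"
      have q: "ln (1/e) > 0" using e by simp
      have "(\<lambda>t. ereal (ln (real (sep_num \<phi> X t e)) / (t * ln (1 / e))))
          = (\<lambda>t. ereal (ln (real (sep_num \<phi> X t e)) / t) * ereal (1 / ln (1/e)))"
        by (auto simp: fun_eq_iff)
      moreover have "Limsup at_top (\<lambda>t. ereal (ln (real (sep_num \<phi> X t e)) / t) * ereal (1 / ln (1/e)))
          = P e * ereal (1 / ln (1/e))"
        unfolding P_def by (rule Limsup_ereal_mult_right) (use q in auto)
      ultimately have "Limsup at_top (\<lambda>t. ereal (ln (real (sep_num \<phi> X t e)) / (t * ln (1 / e))))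
          = P e * ereal (1 / ln (1/e))" by simp
      then show "Limsup at_top (\<lambda>t. ereal (ln (real (sep_num \<phi> X t e)) / (t * ln (1 / e))))
        = P e / ereal (ln (1/e))" using q by (simp add: ediv_eq)
    qed
    have up: "upper_mmdim \<phi> X = Limsup (at_right 0) (\<lambda>e. R e / ereal (ln (1/e)))"
      unfolding upper_mmdim_def R_def ..
    have lw: "lower_mmdim \<phi> X = Liminf (at_right 0) (\<lambda>e. R e / ereal (ln (1/e)))"
      unfolding lower_mmdim_def R_def ..
    have c2: "upper_mmdim \<phi> X =
        Limsup (at_right 0) (\<lambda>\<epsilon>. ereal (Lim at_top (\<lambda>t. ln (real (cover_num \<phi> X t \<epsilon>)) / (t * ln (1 / \<epsilon>)))))"
      unfolding up Limsup_eq[OF Cl_eq]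
      by (rule sandwich_Limsup[symmetric]) (use R0 sC1 sC2 in auto)
    have c3: "upper_mmdim \<phi> X =
        Limsup (at_right 0) (\<lambda>\<epsilon>. Limsup at_top (\<lambda>t. ereal (ln (real (sep_num \<phi> X t \<epsilon>)) / (t * ln (1 / \<epsilon>)))))"
      unfolding up Limsup_eq[OF Sl_eq]
      by (rule sandwich_Limsup[symmetric]) (use R0 sP1 sP2 in auto)
    have c4: "lower_mmdim \<phi> X =
        Liminf (at_right 0) (\<lambda>\<epsilon>. ereal (Lim at_top (\<lambda>t. ln (real (cover_num \<phi> X t \<epsilon>)) / (t * ln (1 / \<epsilon>)))))"
      unfolding lw Liminf_eq[OF Cl_eq]
      by (rule sandwich_Liminf[symmetric]) (use R0 sC1 sC2 in auto)
    have c5: "lower_mmdim \<phi> X =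
        Liminf (at_right 0) (\<lambda>\<epsilon>. Limsup at_top (\<lambda>t. ereal (ln (real (sep_num \<phi> X t \<epsilon>)) / (t * ln (1 / \<epsilon>)))))"
      unfolding lw Liminf_eq[OF Sl_eq]
      by (rule sandwich_Liminf[symmetric]) (use R0 sP1 sP2 in auto)
    show ?thesis using c1 c2 c3 c4 c5 by blast
  qed
qed

end
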